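(* Consider the iterates $x_k,y_k,u_k$ of the mirror triangle method with inexact directional derivatives (see context). For every $k\ge0$, $x_{k+1}$ and $y_{k+1}$ are convex combinations of $u_0,\dots,u_{k+1}$. Moreover $x_{k+1}=\sum_{l=0}^{k+1}\gamma_{k+1}^lu_l$, where $\gamma_0^0=1$, $\gamma_1^0=0$, $\gamma_1^1=1$, and for $k\ge1$ $$\gamma_{k+1}^l=\begin{cases}\big(1-\frac{\alpha_{k+1}}{A_{k+1}}\big)\gamma_k^l,& l=0,\dots,k-1,\\ \frac{\alpha_{k+1}}{A_{k+1}}\big(1-n\frac{\alpha_k}{A_k}\big)+n\big(\frac{\alpha_k}{A_k}-\frac{\alpha_{k+1}}{A_{k+1}}\big),& l=k,\\ n\frac{\alpha_{k+1}}{A_{k+1}},& l=k+1.\end{cases}$$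
   Context: Here $n\ge1$ is the dimension of $\mathbb{R}^n$ and $\|x\|_L^2=L\sum_ix_i^2$ for some $L>0$. The method: $x_0=u_0=y_0\in\mathbb{R}^n$, $\alpha_0=1-\frac1n$, $A_0=\alpha_0$; for $k\ge0$: $\alpha_{k+1}=\frac{k+2n}{2n^2}$, $A_{k+1}=A_k+\alpha_{k+1}$, $y_{k+1}=\frac{\alpha_{k+1}u_k+A_kx_k}{A_{k+1}}$, $u_{k+1}=\arg\min_{x\in\mathbb{R}^n}\{\frac12\|x-u_k\|_L^2+\alpha_{k+1}\langle g_{k+1},x\rangle\}$ for some vector $g_{k+1}$ (in the method, $g_{k+1}=n(\langle\nabla f(y_{k+1}),e_{k+1}\rangle+\tilde\delta_{k+1})e_{k+1}$), and $x_{k+1}=y_{k+1}+n\frac{\alpha_{k+1}}{A_{k+1}}(u_{k+1}-u_k)$. *)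

theory Defs
  imports "HOL-Analysis.Analysis"
begin

fun mtm_alpha :: "nat \<Rightarrow> nat \<Rightarrow> real" where
  "mtm_alpha n 0 = 1 - 1 / real n"
| "mtm_alpha n (Suc k) = (real k + 2 * real n) / (2 * (real n)^2)"

fun mtm_A :: "nat \<Rightarrow> nat \<Rightarrow> real" where
  "mtm_A n 0 = mtm_alpha n 0"
| "mtm_A n (Suc k) = mtm_A n k + mtm_alpha n (Suc k)"

text \<open>Coefficients gamma_k^l (set to 0 for l > k, where the paper leaves them undefined).\<close>

fun mtm_gamma :: "nat \<Rightarrow> nat \<Rightarrow> nat \<Rightarrow> real" where
  "mtm_gamma n 0 l = (if l = 0 then 1 else 0)"
| "mtm_gamma n (Suc 0) l = (if l = 1 then 1 else 0)"
| "mtm_gamma n (Suc (Suc k)) l =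
     (let k' = Suc k;
          r' = mtm_alpha n (Suc k') / mtm_A n (Suc k');
          r = mtm_alpha n k' / mtm_A n k'
      in if l < k' then (1 - r') * mtm_gamma n k' l
         else if l = k' then r' * (1 - real n * r) + real n * (r - r')
         else if l = Suc k' then real n * r'
         else 0)"

end

theory Submission
  imports Defs
begin

lemma A_closed:
  assumes "n \<ge> 1"
  shows "mtm_A n k = (4*(real n)^2 - 4*real n + (real k)^2 - real k + 4*real n*real k)/(4*(real n)^2)"
proof (induction k)
  case 0
  then show ?case using assms by (simp add: field_simps power2_eq_square)
next
  case (Suc k)
  have "mtm_A n (Suc k) = mtm_A n k + mtm_alpha n (Suc k)" by simp
  also have "\<dots> = (4*(real n)^2 - 4*real n + (real k)^2 - real k + 4*real n*real k)/(4*(real n)^2)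
     + (real k + 2 * real n) / (2 * (real n)^2)" using Suc.IH by simp
  finally have "mtm_A n (Suc k) = (4*(real n)^2 - 4*real n + (real k)^2 - real k + 4*real n*real k)/(4*(real n)^2)
     + (real k + 2 * real n) / (2 * (real n)^2)" .
  then show ?case using assms by (simp only: ) (simp add: field_simps power2_eq_square)
qed

lemma p1: "(N::real) \<ge> 1 \<Longrightarrow> (k::real) \<ge> 0 \<Longrightarrow> 4*N^2 - 4*N + (k+1)^2 - (k+1) + 4*N*(k+1) > 0"
  by (smt (verit, ccfv_SIG) pos2 self_le_power zero_less_mult_iff)
lemma p3: assumes "(N::real) \<ge> 1" "(k::real) \<ge> 0" shows "(k+1+2*N)*(4*N^2 - 4*N + (k+1)^2 - (k+1) + 4*N*(k+1)) \<le> (k+2*N)*(4*N^2 - 4*N + (k+2)^2 - (k+2) + 4*N*(k+2))"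
proof -
  have e: "(k+2*N)*(4*N^2 - 4*N + (k+2)^2 - (k+2) + 4*N*(k+2)) - (k+1+2*N)*(4*N^2 - 4*N + (k+1)^2 - (k+1) + 4*N*(k+1))
    = k^2 + k + 4*N*k + 4*N + 4*N^2" by (simp add: algebra_simps power2_eq_square)
  have "k^2 + k + 4*N*k + 4*N + 4*N^2 \<ge> 0" using assms by simp
  then show ?thesis using e by linarith
qed
lemma p2: assumes "(N::real) \<ge> 1" "(k::real) \<ge> 0" shows "N * ((k+2*N)/(2*N^2)) \<le> (4*N^2 - 4*N + (k+1)^2 - (k+1) + 4*N*(k+1))/(4*N^2)"
proof -
  have e: "(4*N^2 - 4*N + (k+1)^2 - (k+1) + 4*N*(k+1)) - 2*N*(k+2*N) = k^2 + k + 2*N*k" by (simp add: algebra_simps power2_eq_square)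
  have "k^2 + k + 2*N*k \<ge> 0" using assms by simp
  then have "2*N*(k+2*N) \<le> (4*N^2 - 4*N + (k+1)^2 - (k+1) + 4*N*(k+1))" using e by linarith
  then show ?thesis using assms by (simp add: field_simps power2_eq_square)
qed

lemma Dsuc: "(real (Suc k))^2 - real (Suc k) = (real k + 1)^2 - (real k + 1)" by simp
lemma Dsuc2: "(real (Suc (Suc k)))^2 - real (Suc (Suc k)) = (real k + 2)^2 - (real k + 2)" by simp

lemma h1: "(b::real)>0 \<Longrightarrow> N*a \<le> b \<Longrightarrow> N*(a/b) \<le> 1" by (simp add: field_simps)
lemma h2: "(b::real)>0 \<Longrightarrow> (d::real)>0 \<Longrightarrow> a*d \<le> c*b \<Longrightarrow> a/b \<le> c/d" by (simp add: field_simps)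

lemma h3: "(b::real)>0 \<Longrightarrow> b = a + c \<Longrightarrow> a/b = 1 - c/b" by (simp add: field_simps)

lemma A_pos: assumes n: "n \<ge> 1" shows "mtm_A n (Suc k) > 0"
proof -
  have N: "real n \<ge> 1" using n by simp
  have "mtm_A n (Suc k) = (4*(real n)^2 - 4*real n + (real k + 1)^2 - (real k + 1) + 4*real n*(real k + 1))/(4*(real n)^2)"
    unfolding A_closed[OF n] by (simp add: add.commute)
  moreover have "4*(real n)^2 - 4*real n + (real k + 1)^2 - (real k + 1) + 4*real n*(real k + 1) > 0"
    using p1[OF N, of "real k"] by simp
  ultimately show ?thesis using N by simp
qed

lemma nr_le1: assumes n: "n \<ge> 1"
  shows "real n * (mtm_alpha n (Suc k) / mtm_A n (Suc k)) \<le> 1"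
proof -
  have N: "real n \<ge> 1" using n by simp
  have p: "mtm_A n (Suc k) > 0" using A_pos n by blast
  have "mtm_A n (Suc k) = (4*(real n)^2 - 4*real n + (real k + 1)^2 - (real k + 1) + 4*real n*(real k + 1))/(4*(real n)^2)"
    unfolding A_closed[OF n] by (simp add: add.commute)
  then have "real n * mtm_alpha n (Suc k) \<le> mtm_A n (Suc k)"
    using p2[OF N, of "real k"] by simp
  then show ?thesis using p by (rule h1[rotated])
qed

lemma r_nonneg: assumes n: "n \<ge> 1"
  shows "0 \<le> mtm_alpha n (Suc k) / mtm_A n (Suc k)"
  using A_pos[OF n, of k] by (intro divide_nonneg_pos) auto

lemma r_dec: assumes n: "n \<ge> 1"
  shows "mtm_alpha n (Suc (Suc k)) / mtm_A n (Suc (Suc k)) \<le> mtm_alpha n (Suc k) / mtm_A n (Suc k)"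
proof -
  have N: "real n \<ge> 1" using n by simp
  have q1: "mtm_A n (Suc k) > 0" "mtm_A n (Suc (Suc k)) > 0" using A_pos n by blast+
  define N where "N = real n"
  define D1 where "D1 = 4*N^2 - 4*N + (real k + 1)^2 - (real k + 1) + 4*N*(real k + 1)"
  define D2 where "D2 = 4*N^2 - 4*N + (real k + 2)^2 - (real k + 2) + 4*N*(real k + 2)"
  have a1: "mtm_A n (Suc k) = D1/(4*N^2)" unfolding A_closed[OF n] D1_def N_def by (simp add: add.commute)
  have a2: "mtm_A n (Suc (Suc k)) = D2/(4*N^2)" unfolding A_closed[OF n] D2_def N_def by (simp add: add.commute)
  have b1: "mtm_alpha n (Suc k) = (real k + 2*N)/(2*N^2)" unfolding N_def by simp
  have b2: "mtm_alpha n (Suc (Suc k)) = (real k + 1 + 2*N)/(2*N^2)" unfolding N_def by simp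
  have ineq: "(real k+1+2*N)*D1 \<le> (real k+2*N)*D2" unfolding D1_def D2_def
    using p3[of N "real k"] N unfolding N_def by simp
  have Np: "N > 0" using N unfolding N_def by simp
  have "mtm_alpha n (Suc (Suc k)) * mtm_A n (Suc k) \<le> mtm_alpha n (Suc k) * mtm_A n (Suc (Suc k))"
  proof -
    have "mtm_alpha n (Suc (Suc k)) * mtm_A n (Suc k) = ((real k+1+2*N)*D1) / (8*N^4)"
      unfolding a1 b2 by (simp add: field_simps power2_eq_square power4_eq_xxxx)
    also have "\<dots> \<le> ((real k+2*N)*D2) / (8*N^4)" using ineq Np by (simp add: divide_right_mono)
    also have "\<dots> = mtm_alpha n (Suc k) * mtm_A n (Suc (Suc k))"
      unfolding a2 b1 by (simp add: field_simps power2_eq_square power4_eq_xxxx)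
    finally show ?thesis .
  qed
  then show ?thesis using q1 by (intro h2) auto
qed

lemma nr1: assumes n: "n \<ge> 1" shows "real n * (mtm_alpha n (Suc 0) / mtm_A n (Suc 0)) = 1"
  and "mtm_A n (Suc 0) = 1"
proof -
  have N: "real n > 0" using n by simp
  show a: "mtm_A n (Suc 0) = 1" using N by (simp add: field_simps power2_eq_square)
  show "real n * (mtm_alpha n (Suc 0) / mtm_A n (Suc 0)) = 1" unfolding a
    using N by (simp add: field_simps power2_eq_square)
qed

lemma gamma_props:
  assumes n: "n \<ge> 1"
  shows "(\<forall>l. 0 \<le> mtm_gamma n (Suc m) l) \<and>
         mtm_gamma n (Suc m) (Suc m) = real n * (mtm_alpha n (Suc m) / mtm_A n (Suc m)) \<and>
         (\<Sum>l\<le>Suc m. mtm_gamma n (Suc m) l) = 1"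
proof (induction m)
  case 0
  then show ?case using nr1[OF n] by simp
next
  case (Suc m)
  define r' where "r' = mtm_alpha n (Suc (Suc m)) / mtm_A n (Suc (Suc m))"
  define r where "r = mtm_alpha n (Suc m) / mtm_A n (Suc m)"
  have N: "real n \<ge> 1" using n by simp
  have r'0: "0 \<le> r'" unfolding r'_def by (rule r_nonneg[OF n])
  have r0: "0 \<le> r" unfolding r_def by (rule r_nonneg[OF n])
  have nr': "real n * r' \<le> 1" unfolding r'_def by (rule nr_le1[OF n])
  have nr: "real n * r \<le> 1" unfolding r_def by (rule nr_le1[OF n])
  have dec: "r' \<le> r" unfolding r'_def r_def by (rule r_dec[OF n])
  have r'1: "r' \<le> 1" using mult_right_mono[OF N r'0] nr' by simp
  have g: "mtm_gamma n (Suc (Suc m)) l =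
     (if l < Suc m then (1 - r') * mtm_gamma n (Suc m) l
         else if l = Suc m then r' * (1 - real n * r) + real n * (r - r')
         else if l = Suc (Suc m) then real n * r'
         else 0)" for l
    unfolding r'_def r_def by (simp add: Let_def)
  have IH1: "\<And>l. 0 \<le> mtm_gamma n (Suc m) l" using Suc.IH by blast
  have IH2: "mtm_gamma n (Suc m) (Suc m) = real n * r" using Suc.IH unfolding r_def by blast
  have IH3: "(\<Sum>l\<le>Suc m. mtm_gamma n (Suc m) l) = 1" using Suc.IH by blast
  have S1: "(\<Sum>l\<le>m. mtm_gamma n (Suc m) l) = 1 - real n * r" using IH3 IH2 by simp
  have S2: "(\<Sum>l\<le>m. mtm_gamma n (Suc (Suc m)) l) = (1 - r') * (\<Sum>l\<le>m. mtm_gamma n (Suc m) l)"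
  proof -
    have "(\<Sum>l\<le>m. mtm_gamma n (Suc (Suc m)) l) = (\<Sum>l\<le>m. (1 - r') * mtm_gamma n (Suc m) l)"
      by (rule sum.cong) (simp_all only: g, auto)
    then show ?thesis by (simp only: sum_distrib_left)
  qed
  have nonneg: "0 \<le> mtm_gamma n (Suc (Suc m)) l" for l
  proof -
    have "0 \<le> r' * (1 - real n * r)" using r'0 nr by simp
    moreover have "0 \<le> real n * (r - r')" using dec by simp
    moreover have "0 \<le> (1 - r') * mtm_gamma n (Suc m) l" using r'1 IH1 by simp
    ultimately show ?thesis using r'0 unfolding g by auto
  qed
  have sum: "(\<Sum>l\<le>Suc (Suc m). mtm_gamma n (Suc (Suc m)) l) = 1"
  proof -
    have "(\<Sum>l\<le>Suc (Suc m). mtm_gamma n (Suc (Suc m)) l) = (\<Sum>l\<le>m. mtm_gamma n (Suc (Suc m)) l)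
       + mtm_gamma n (Suc (Suc m)) (Suc m) + mtm_gamma n (Suc (Suc m)) (Suc (Suc m))"
      by (simp only: sum.atMost_Suc)
    also have "\<dots> = (1 - r') * (1 - real n * r) + (r' * (1 - real n * r) + real n * (r - r')) + real n * r'"
      unfolding S2 S1 by (simp only: g, simp)
    also have "\<dots> = 1" by (simp add: algebra_simps)
    finally show ?thesis .
  qed
  have "mtm_gamma n (Suc (Suc m)) (Suc (Suc m)) = real n * r'" by (simp only: g, simp)
  then show ?case using nonneg sum unfolding r'_def by blast
qed

theorem lemma12:
  fixes x y u g :: "nat \<Rightarrow> real ^ 'n" and L :: real
  defines "n \<equiv> CARD('n)"
  assumes L_pos: "L > 0"
    and init: "x 0 = u 0" "y 0 = u 0"
    and y_step: "\<And>k. y (Suc k) =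
        (1 / mtm_A n (Suc k)) *\<^sub>R (mtm_alpha n (Suc k) *\<^sub>R u k + mtm_A n k *\<^sub>R x k)"
    and u_step: "\<And>k. is_arg_min
        (\<lambda>z. (1/2) * (L * (norm (z - u k))^2) + mtm_alpha n (Suc k) * (g (Suc k) \<bullet> z))
        (\<lambda>_. True) (u (Suc k))"
    and x_step: "\<And>k. x (Suc k) = y (Suc k)
        + (real n * mtm_alpha n (Suc k) / mtm_A n (Suc k)) *\<^sub>R (u (Suc k) - u k)"
  shows "\<forall>k. x (Suc k) \<in> convex hull (u ` {..Suc k})
           \<and> y (Suc k) \<in> convex hull (u ` {..Suc k})
           \<and> x (Suc k) = (\<Sum>l\<le>Suc k. mtm_gamma n (Suc k) l *\<^sub>R u l)"
proof -
  have n: "n \<ge> 1" unfolding n_def using zero_less_card_finite[where 'a='n] by linarith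
  have y_rep: "y (Suc (Suc k)) = (mtm_alpha n (Suc (Suc k)) / mtm_A n (Suc (Suc k))) *\<^sub>R u (Suc k)
      + (1 - mtm_alpha n (Suc (Suc k)) / mtm_A n (Suc (Suc k))) *\<^sub>R x (Suc k)" for k
  proof -
    have p: "mtm_A n (Suc (Suc k)) > 0" using A_pos[OF n] by blast
    have e: "mtm_A n (Suc k) / mtm_A n (Suc (Suc k)) = 1 - mtm_alpha n (Suc (Suc k)) / mtm_A n (Suc (Suc k))"
      using p by (intro h3) auto
    have "y (Suc (Suc k)) = (mtm_alpha n (Suc (Suc k)) / mtm_A n (Suc (Suc k))) *\<^sub>R u (Suc k)
      + (mtm_A n (Suc k) / mtm_A n (Suc (Suc k))) *\<^sub>R x (Suc k)"
      unfolding y_step[of "Suc k"] by (simp add: scaleR_add_right)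
    then show ?thesis unfolding e .
  qed
  have y1: "y (Suc 0) = u 0"
  proof -
    have "y (Suc 0) = (1 / mtm_A n (Suc 0)) *\<^sub>R ((mtm_alpha n (Suc 0) + mtm_A n 0) *\<^sub>R u 0)"
      unfolding y_step[of 0] init by (simp add: scaleR_add_left)
    also have "mtm_alpha n (Suc 0) + mtm_A n 0 = mtm_A n (Suc 0)" by simp
    finally show ?thesis using nr1(2)[OF n] by simp
  qed
  have xs: "x (Suc k) = (\<Sum>l\<le>Suc k. mtm_gamma n (Suc k) l *\<^sub>R u l)" for k
  proof (induction k)
    case 0
    have "x (Suc 0) = u 0 + 1 *\<^sub>R (u (Suc 0) - u 0)"
      using x_step[of 0] y1 nr1(1)[OF n] by (simp add: times_divide_eq_right)
    then show ?case by simp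
  next
    case (Suc k)
    define r' where "r' = mtm_alpha n (Suc (Suc k)) / mtm_A n (Suc (Suc k))"
    define r where "r = mtm_alpha n (Suc k) / mtm_A n (Suc k)"
    have g: "mtm_gamma n (Suc (Suc k)) l =
     (if l < Suc k then (1 - r') * mtm_gamma n (Suc k) l
         else if l = Suc k then r' * (1 - real n * r) + real n * (r - r')
         else if l = Suc (Suc k) then real n * r'
         else 0)" for l
      unfolding r'_def r_def by (simp add: Let_def)
    have G: "mtm_gamma n (Suc k) (Suc k) = real n * r" using gamma_props[OF n, of k] unfolding r_def by blast
    define S where "S = (\<Sum>l\<le>k. mtm_gamma n (Suc k) l *\<^sub>R u l)"
    have xk: "x (Suc k) = S + (real n * r) *\<^sub>R u (Suc k)"
      unfolding Suc.IH S_def by (simp add: G)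
    have S2: "(\<Sum>l\<le>k. mtm_gamma n (Suc (Suc k)) l *\<^sub>R u l) = (1 - r') *\<^sub>R S"
    proof -
      have "(\<Sum>l\<le>k. mtm_gamma n (Suc (Suc k)) l *\<^sub>R u l) = (\<Sum>l\<le>k. (1 - r') *\<^sub>R (mtm_gamma n (Suc k) l *\<^sub>R u l))"
        by (rule sum.cong) (simp_all only: g, auto)
      then show ?thesis unfolding S_def by (simp only: scaleR_sum_right)
    qed
    have rhs: "(\<Sum>l\<le>Suc (Suc k). mtm_gamma n (Suc (Suc k)) l *\<^sub>R u l)
       = (1 - r') *\<^sub>R S + (r' * (1 - real n * r) + real n * (r - r')) *\<^sub>R u (Suc k) + (real n * r') *\<^sub>R u (Suc (Suc k))"
    proof -
      have "(\<Sum>l\<le>Suc (Suc k). mtm_gamma n (Suc (Suc k)) l *\<^sub>R u l) = (\<Sum>l\<le>k. mtm_gamma n (Suc (Suc k)) l *\<^sub>R u l)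
       + mtm_gamma n (Suc (Suc k)) (Suc k) *\<^sub>R u (Suc k) + mtm_gamma n (Suc (Suc k)) (Suc (Suc k)) *\<^sub>R u (Suc (Suc k))"
        by (simp only: sum.atMost_Suc)
      then show ?thesis unfolding S2 by (simp only: g) simp
    qed
    have lhs: "x (Suc (Suc k)) = r' *\<^sub>R u (Suc k) + (1 - r') *\<^sub>R (S + (real n * r) *\<^sub>R u (Suc k))
        + (real n * r') *\<^sub>R (u (Suc (Suc k)) - u (Suc k))"
    proof -
      have c: "real n * mtm_alpha n (Suc (Suc k)) / mtm_A n (Suc (Suc k)) = real n * r'"
        unfolding r'_def by simp
      show ?thesis unfolding x_step[of "Suc k"] c y_rep[of k] r'_def[symmetric] xk by simp
    qed
    define a where "a = u (Suc k)"
    define b where "b = u (Suc (Suc k))"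
    have "r' *\<^sub>R a + (1 - r') *\<^sub>R (S + (real n * r) *\<^sub>R a) + (real n * r') *\<^sub>R (b - a)
       = (1 - r') *\<^sub>R S + (r' + (1 - r') * (real n * r) - real n * r') *\<^sub>R a + (real n * r') *\<^sub>R b"
      by (simp add: scaleR_add_right scaleR_diff_right scaleR_add_left scaleR_diff_left)
    also have "r' + (1 - r') * (real n * r) - real n * r' = r' * (1 - real n * r) + real n * (r - r')"
      by (simp add: algebra_simps)
    finally show ?case unfolding rhs lhs a_def b_def .
  qed
  show ?thesis
  proof (intro allI conjI)
    fix k
    have xin: "x (Suc k) \<in> convex hull (u ` {..Suc k})" for k
      unfolding xs
    proof (rule convex_sum)
      show "finite {..Suc k}" by simp
      show "convex (convex hull (u ` {..Suc k}))" by simp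
      show "sum (mtm_gamma n (Suc k)) {..Suc k} = 1" using gamma_props[OF n, of k] by blast
      show "\<And>i. i \<in> {..Suc k} \<Longrightarrow> 0 \<le> mtm_gamma n (Suc k) i" using gamma_props[OF n, of k] by blast
      show "\<And>i. i \<in> {..Suc k} \<Longrightarrow> u i \<in> convex hull (u ` {..Suc k})" by (simp add: hull_inc)
    qed
    show "x (Suc k) \<in> convex hull (u ` {..Suc k})" by (rule xin)
    show "x (Suc k) = (\<Sum>l\<le>Suc k. mtm_gamma n (Suc k) l *\<^sub>R u l)" by (rule xs)
    show "y (Suc k) \<in> convex hull (u ` {..Suc k})"
    proof (cases k)
      case 0
      then show ?thesis using y1 by (simp add: hull_inc)
    next
      case (Suc j)
      define r' where "r' = mtm_alpha n (Suc (Suc j)) / mtm_A n (Suc (Suc j))"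
      have r'0: "0 \<le> r'" unfolding r'_def by (rule r_nonneg[OF n])
      have nr': "real n * r' \<le> 1" unfolding r'_def by (rule nr_le1[OF n])
      have N: "real n \<ge> 1" using n by simp
      have r'1: "r' \<le> 1" using mult_right_mono[OF N r'0] nr' by simp
      have sub: "convex hull (u ` {..Suc j}) \<subseteq> convex hull (u ` {..Suc (Suc j)})"
        by (rule hull_mono) auto
      have a: "x (Suc j) \<in> convex hull (u ` {..Suc (Suc j)})" using xin[of j] sub by blast
      have b: "u (Suc j) \<in> convex hull (u ` {..Suc (Suc j)})" by (rule hull_inc) auto
      have "y (Suc (Suc j)) \<in> convex hull (u ` {..Suc (Suc j)})"
        unfolding y_rep[of j] r'_def[symmetric]
        by (rule convexD) (use a b r'0 r'1 in auto)
      then show ?thesis using Suc by simp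
    qed
  qed
qed

end
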